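(* Let $r$, $s$, $c$, $d$ and $a_n$ be any integers with $r\neq0$ and $r+d\neq0$, let $n$ be a positive integer, and assume $U_d$, $U_r$, $U_{r+d}$ are nonzero. Then \[ \begin{split} &\sum_{a_{n-1}=c}^{a_n}\sum_{a_{n-2}=c}^{a_{n-1}}\cdots\sum_{a_0=c}^{a_1}\left(\frac{U_d}{U_{r+d}}\right)^{a_0}W_{ra_0+s} =\frac{(-1)^nU_d^{n+a_n}}{q^{dn}U_r^nU_{r+d}^{a_n}}W_{(r+d)n+ra_n+s}\\ &\qquad-\left(\frac{U_d}{U_{r+d}}\right)^{c-1}\sum_{j=0}^{n-1}\frac{(-1)^{n-j}}{q^{d(n-j)}}\left(\frac{U_d}{U_r}\right)^{n-j}W_{r(n-j+c-1)+d(n-j)+s}\binom{a_n+j-c}{j}. \end{split} \]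
   Context: Let $a,b,p,q$ be complex numbers with $p\neq0$, $q\neq0$. The Horadam sequence $W_j=W_j(a,b;p,q)$ is defined by $W_0=a$, $W_1=b$, $W_j=pW_{j-1}-qW_{j-2}$ for $j\ge2$, and extended to negative indices by $W_{-m}=(pW_{-m+1}-W_{-m+2})/q$, so the recurrence holds for all integers. $U_j=W_j(0,1;p,q)$ is the Lucas sequence of the first kind. For integers $c,m$ and a function $f$ on the integers, $\sum_{k=c}^m f(k)$ denotes the usual sum if $m\ge c$, equals $0$ if $m=c-1$, and equals $-\sum_{k=m+1}^{c-1}f(k)$ if $m\le c-2$. The nested sum $\sum_{a_{n-1}=c}^{a_n}\cdots\sum_{a_0=c}^{a_1}g(a_0)$ is the iterated sum with $n$ summation signs: innermost over $a_0$ from $c$ to $a_1$, then $a_1$ from $c$ to $a_2$, ..., outermost $a_{n-1}$ from $c$ to $a_n$. For an integer $j\ge0$ and any number $y$, $\binom{y}{j}=y(y-1)\cdots(y-j+1)/j!$. *)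

theory Defs
  imports Complex_Main
begin

fun Wpos :: "complex \<Rightarrow> complex \<Rightarrow> complex \<Rightarrow> complex \<Rightarrow> nat \<Rightarrow> complex" where
  "Wpos a b p q 0 = a"
| "Wpos a b p q (Suc 0) = b"
| "Wpos a b p q (Suc (Suc n)) = p * Wpos a b p q (Suc n) - q * Wpos a b p q n"

text \<open>Horadam sequence on nonpositive indices: Wneg k = W_{-k},
  W_{-m} = (p W_{-m+1} - W_{-m+2}) / q.\<close>
fun Wneg :: "complex \<Rightarrow> complex \<Rightarrow> complex \<Rightarrow> complex \<Rightarrow> nat \<Rightarrow> complex" where
  "Wneg a b p q 0 = a"
| "Wneg a b p q (Suc 0) = (p * a - b) / q"
| "Wneg a b p q (Suc (Suc m)) = (p * Wneg a b p q (Suc m) - Wneg a b p q m) / q"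

definition W :: "complex \<Rightarrow> complex \<Rightarrow> complex \<Rightarrow> complex \<Rightarrow> int \<Rightarrow> complex" where
  "W a b p q j = (if j \<ge> 0 then Wpos a b p q (nat j) else Wneg a b p q (nat (- j)))"

definition U :: "complex \<Rightarrow> complex \<Rightarrow> int \<Rightarrow> complex" where
  "U p q j = W 0 1 p q j"

definition gsum :: "int \<Rightarrow> int \<Rightarrow> (int \<Rightarrow> complex) \<Rightarrow> complex" where
  "gsum c m f = (if m \<ge> c then (\<Sum>k\<in>{c..m}. f k)
                 else if m = c - 1 then 0
                 else - (\<Sum>k\<in>{m+1..c-1}. f k))"

text \<open>nested n c g m = sum_{a_{n-1}=c}^{m} ... sum_{a_0=c}^{a_1} g a_0 (n summation signs).\<close>
fun nested :: "nat \<Rightarrow> int \<Rightarrow> (int \<Rightarrow> complex) \<Rightarrow> int \<Rightarrow> complex" where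
  "nested 0 c g m = g m"
| "nested (Suc n) c g m = gsum c m (nested n c g)"

end

theory Submission imports Defs begin

definition isrec :: "complex \<Rightarrow> complex \<Rightarrow> (int \<Rightarrow> complex) \<Rightarrow> bool" where
  "isrec p q f \<longleftrightarrow> (\<forall>j. f (j + 2) = p * f (j + 1) - q * f j)"

lemma rec_zero:
  assumes "isrec p q f" "f 0 = 0" "f 1 = 0" "q \<noteq> 0"
  shows "f j = 0"
proof -
  have R: "f (j + 2) = p * f (j + 1) - q * f j" for j using assms(1) unfolding isrec_def by blast
  have pos: "f (int k) = 0 \<and> f (int k + 1) = 0" for k
  proof (induction k)
    case 0 then show ?case using assms by simp
  next
    case (Suc k)
    have "f (int k + 2) = 0" using R[of "int k"] Suc by simp
    then show ?case using Suc by (simp add: algebra_simps)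
  qed
  have neg: "f (- int k) = 0 \<and> f (- int k + 1) = 0" for k
  proof (induction k)
    case 0 then show ?case using assms by simp
  next
    case (Suc k)
    have "f (- int k - 1 + 2) = p * f (- int k - 1 + 1) - q * f (- int k - 1)" by (rule R)
    hence "q * f (- int k - 1) = 0" using Suc by (simp add: algebra_simps)
    hence "f (- int k - 1) = 0" using assms(4) by simp
    moreover have "- int (Suc k) = - int k - 1" "- int (Suc k) + 1 = - int k" by simp_all
    ultimately show ?case using Suc by (simp only:)
  qed
  show ?thesis
  proof (cases "j \<ge> 0")
    case True then show ?thesis using pos[of "nat j"] by simp
  next
    case False then show ?thesis using neg[of "nat (-j)"] by simp
  qed
qed

lemma rec_eq:
  assumes "isrec p q f" "isrec p q g" "f 0 = g 0" "f 1 = g 1" "q \<noteq> 0"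
  shows "f j = g j"
proof -
  have "isrec p q (\<lambda>j. f j - g j)" unfolding isrec_def
  proof
    fix j
    have h1: "f (j + 2) = p * f (j + 1) - q * f j" and h2: "g (j + 2) = p * g (j + 1) - q * g j"
      using assms(1,2) unfolding isrec_def by blast+
    show "f (j + 2) - g (j + 2) = p * (f (j + 1) - g (j + 1)) - q * (f j - g j)"
      unfolding h1 h2 by (simp add: algebra_simps)
  qed
  from rec_zero[OF this] assms(3-5) show ?thesis by simp
qed

lemma W_rec:
  assumes "q \<noteq> 0"
  shows "isrec p q (W a b p q)"
  unfolding isrec_def
proof
  fix j :: int
  show "W a b p q (j + 2) = p * W a b p q (j + 1) - q * W a b p q j"
  proof (cases "j \<ge> 0")
    case True
    then obtain n where n: "j = int n" by (metis nonneg_eq_int)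
    have "nat (int n + 2) = Suc (Suc n)" "nat (int n + 1) = Suc n" by auto
    then show ?thesis using n by (simp add: W_def)
  next
    case False
    show ?thesis
    proof (cases "j = -1")
      case True then show ?thesis using assms by (simp add: W_def)
    next
      case False
      define m where "m = nat (- j - 2)"
      have m: "j = - int m - 2" using False \<open>\<not> j \<ge> 0\<close> unfolding m_def by simp
      have e1: "nat (- j) = Suc (Suc m)" using m by simp
      have e2: "nat (- (j + 1)) = Suc m" using m by simp
      have e3: "- (j + 2) = int m" using m by simp
      have A: "W a b p q (j+2) = Wneg a b p q m" using m by (cases "m = 0") (simp_all add: W_def)
      have B: "W a b p q (j+1) = Wneg a b p q (Suc m)" using m e2 by (simp add: W_def)
      have C: "W a b p q j = Wneg a b p q (Suc (Suc m))" using e1 by (simp only: W_def if_not_P \<open>\<not> j \<ge> 0\<close> if_False)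
      show ?thesis unfolding A B C Wneg.simps(3) using assms by simp
    qed
  qed
qed

lemma rec_comb:
  assumes "isrec p q f" "isrec p q g"
  shows "isrec p q (\<lambda>j. \<alpha> * f (j + k) + \<beta> * g (j + l))"
  unfolding isrec_def
proof
  fix j
  have h1: "f (j + k + 2) = p * f (j + k + 1) - q * f (j + k)"
   and h2: "g (j + l + 2) = p * g (j + l + 1) - q * g (j + l)"
    using assms unfolding isrec_def by blast+
  have e: "j + 2 + k = j + k + 2" "j + 1 + k = j + k + 1" "j + 2 + l = j + l + 2" "j + 1 + l = j + l + 1" by simp_all
  show "\<alpha> * f (j + 2 + k) + \<beta> * g (j + 2 + l) = p * (\<alpha> * f (j + 1 + k) + \<beta> * g (j + 1 + l)) - q * (\<alpha> * f (j + k) + \<beta> * g (j + l))"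
    unfolding e h1 h2 by (simp add: algebra_simps)
qed

lemma U_rec: "q \<noteq> 0 \<Longrightarrow> isrec p q (U p q)"
  using W_rec[where a=0 and b=1 and p=p and q=q] unfolding U_def[abs_def] by simp

lemma U_vals: "U p q 0 = 0" "U p q 1 = 1" "U p q (-1) = -1/q"
  by (simp_all add: U_def W_def)

lemma W_lin:
  assumes "q \<noteq> 0"
  shows "W a b p q j = b * U p q j - a * q * U p q (j - 1)"
proof -
  have hr: "isrec p q (\<lambda>j. b * U p q (j + 0) + (- a * q) * U p q (j + (-1)))"
    by (rule rec_comb[OF U_rec U_rec]) (use assms in auto)
  have e0: "W a b p q 0 = b * U p q (0 + 0) + - a * q * U p q (0 + - 1)"
      using assms by (simp add: U_vals W_def)
  have e1: "W a b p q 1 = b * U p q (1 + 0) + - a * q * U p q (1 + - 1)"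
      using assms by (simp add: U_vals W_def)
  show ?thesis using rec_eq[OF W_rec[OF assms] hr e0 e1 assms, of j] by simp
qed

lemma cassini:
  assumes "q \<noteq> 0"
  shows "U p q (d + 1) ^ 2 - U p q d * U p q (d + 2) = q powi d"
proof -
  define C where "C d = U p q (d + 1) ^ 2 - U p q d * U p q (d + 2)" for d
  have R: "U p q (j + 2) = p * U p q (j + 1) - q * U p q j" for j
    using U_rec[OF assms] unfolding isrec_def by blast
  have step: "C (d + 1) = q * C d" for d
  proof -
    have h3: "U p q (d + 1 + 2) = p * U p q (d + 2) - q * U p q (d + 1)" using R[of "d+1"] by (simp add: add.assoc)
    have h2: "U p q (d + 2) = p * U p q (d + 1) - q * U p q d" by (rule R)
    have e: "d + 1 + 1 = d + 2" by simp
    show ?thesis unfolding C_def e h3 unfolding h2 by (simp add: algebra_simps power2_eq_square)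
  qed
  have C0: "C 0 = 1" by (simp add: C_def U_vals)
  have pos: "C (int k) = q powi (int k)" for k
  proof (induction k)
    case 0 show ?case using C0 by simp
  next
    case (Suc k)
    have "C (int (Suc k)) = C (int k + 1)" by (simp add: add.commute)
    also have "\<dots> = q * q powi (int k)" using step Suc by simp
    also have "\<dots> = q powi (int k + 1)" using assms by (simp add: power_int_add_1')
    finally show ?case by (simp add: add.commute)
  qed
  have neg: "C (- int k) = q powi (- int k)" for k
  proof (induction k)
    case 0 show ?case using C0 by simp
  next
    case (Suc k)
    have "q * C (- int (Suc k)) = C (- int (Suc k) + 1)" using step[of "- int (Suc k)"] by simp
    also have "\<dots> = q powi (- int k)" using Suc by simp
    also have "\<dots> = q * q powi (- int (Suc k))" using assms power_int_add_1'[of q "- int (Suc k)"] by simp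
    finally show ?case using assms by simp
  qed
  have "C d = q powi d"
  proof (cases "d \<ge> 0")
    case True then show ?thesis using pos[of "nat d"] by simp
  next
    case False then show ?thesis using neg[of "nat (-d)"] by simp
  qed
  thus ?thesis unfolding C_def .
qed


lemma Fid:
  assumes "q \<noteq> 0"
  shows "U p q (r + d) * U p q (d + 1) - U p q d * U p q (r + d + 1) = q powi d * U p q r"
proof -
  have h1: "isrec p q (\<lambda>r. U p q (d + 1) * U p q (r + d) + (- U p q d) * U p q (r + (d + 1)))"
    by (rule rec_comb[OF U_rec U_rec]) (use assms in auto)
  have h2: "isrec p q (\<lambda>r. q powi d * U p q (r + 0) + 0 * U p q (r + 0))"
    by (rule rec_comb[OF U_rec U_rec]) (use assms in auto)
  have e0: "U p q (d + 1) * U p q (0 + d) + (- U p q d) * U p q (0 + (d + 1)) = q powi d * U p q (0 + 0) + 0 * U p q (0 + 0)"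
    by (simp add: U_vals)
  have e1: "U p q (d + 1) * U p q (1 + d) + (- U p q d) * U p q (1 + (d + 1)) = q powi d * U p q (1 + 0) + 0 * U p q (1 + 0)"
    using cassini[OF assms, where p=p and d=d] by (simp add: U_vals add.commute power2_eq_square add.left_commute)
  have "U p q (d + 1) * U p q (r + d) + (- U p q d) * U p q (r + (d + 1)) = q powi d * U p q (r + 0) + 0 * U p q (r + 0)"
    using rec_eq[OF h1 h2 e0 e1 assms, of r] by simp
  thus ?thesis by (simp add: algebra_simps)
qed

lemma Gid:
  assumes "q \<noteq> 0"
  shows "U p q (r + d) * U p q (t + d) - U p q d * U p q (t + r + d) = q powi d * U p q r * U p q t"
proof -
  have h1: "isrec p q (\<lambda>t. U p q (r + d) * U p q (t + d) + (- U p q d) * U p q (t + (r + d)))"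
    by (rule rec_comb[OF U_rec U_rec]) (use assms in auto)
  have h2: "isrec p q (\<lambda>t. (q powi d * U p q r) * U p q (t + 0) + 0 * U p q (t + 0))"
    by (rule rec_comb[OF U_rec U_rec]) (use assms in auto)
  have e0: "U p q (r + d) * U p q (0 + d) + (- U p q d) * U p q (0 + (r + d)) = (q powi d * U p q r) * U p q (0 + 0) + 0 * U p q (0 + 0)"
    by (simp add: U_vals)
  have e1: "U p q (r + d) * U p q (1 + d) + (- U p q d) * U p q (1 + (r + d)) = (q powi d * U p q r) * U p q (1 + 0) + 0 * U p q (1 + 0)"
    using Fid[OF assms, where r=r and d=d and p=p] by (simp add: U_vals add.commute add.left_commute)
  have "U p q (r + d) * U p q (t + d) + (- U p q d) * U p q (t + (r + d)) = (q powi d * U p q r) * U p q (t + 0) + 0 * U p q (t + 0)"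
    using rec_eq[OF h1 h2 e0 e1 assms, of t] by simp
  thus ?thesis by (simp add: algebra_simps)
qed

lemma Wid:
  assumes "q \<noteq> 0"
  shows "U p q (r + d) * W a b p q (t + d) - U p q d * W a b p q (t + r + d) = q powi d * U p q r * W a b p q t"
proof -
  have g1: "U p q (r + d) * U p q (t + d) - U p q d * U p q (t + r + d) = q powi d * U p q r * U p q t"
    by (rule Gid[OF assms])
  have g2: "U p q (r + d) * U p q (t - 1 + d) - U p q d * U p q (t - 1 + r + d) = q powi d * U p q r * U p q (t - 1)"
    by (rule Gid[OF assms])
  have e: "t + d - 1 = t - 1 + d" "t + r + d - 1 = t - 1 + r + d" by simp_all
  have "U p q (r + d) * W a b p q (t + d) - U p q d * W a b p q (t + r + d)
     = b * (U p q (r + d) * U p q (t + d) - U p q d * U p q (t + r + d))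
       - a * q * (U p q (r + d) * U p q (t - 1 + d) - U p q d * U p q (t - 1 + r + d))"
    unfolding W_lin[OF assms, where a=a and b=b and p=p and j="t + d"] W_lin[OF assms, where a=a and b=b and p=p and j="t + r + d"] e
    by (simp add: algebra_simps)
  also have "\<dots> = q powi d * U p q r * W a b p q t"
    unfolding g1 g2 W_lin[OF assms, where a=a and b=b and p=p and j=t] by (simp add: algebra_simps)
  finally show ?thesis .
qed


lemma sum_tele_int:
  fixes f h :: "int \<Rightarrow> complex"
  assumes "\<And>m. f m - f (m - 1) = h m"
  shows "(\<Sum>x\<in>{a..a - 1 + int k}. h x) = f (a - 1 + int k) - f (a - 1)"
proof (induction k)
  case 0 then show ?case by simp
next
  case (Suc k)
  have "{a..a - 1 + int (Suc k)} = insert (1 + (a - 1 + int k)) {a..a - 1 + int k}"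
    using atLeastAtMostPlus1_int_conv[of a "a - 1 + int k"] by (simp add: algebra_simps)
  moreover have "1 + (a - 1 + int k) \<notin> {a..a - 1 + int k}" by simp
  ultimately have "(\<Sum>x\<in>{a..a - 1 + int (Suc k)}. h x) = h (a + int k) + (\<Sum>x\<in>{a..a - 1 + int k}. h x)"
    by (simp add: algebra_simps)
  also have "\<dots> = f (a - 1 + int (Suc k)) - f (a - 1)"
    using Suc assms[of "a + int k"] by (simp add: algebra_simps)
  finally show ?case .
qed

lemma gsum_tele:
  fixes f h :: "int \<Rightarrow> complex"
  assumes "\<And>m. f m - f (m - 1) = h m"
  shows "gsum c M h = f M - f (c - 1)"
proof -
  consider "M \<ge> c" | "M = c - 1" | "M < c - 1" by linarith
  then show ?thesis
  proof cases
    case 1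
    then have "M = c - 1 + int (nat (M - c + 1))" by simp
    then show ?thesis using 1 sum_tele_int[where f=f and h=h, OF assms, of c "nat (M - c + 1)"] unfolding gsum_def by simp
  next
    case 2 then show ?thesis unfolding gsum_def by simp
  next
    case 3
    then have e: "c - 1 = M + 1 - 1 + int (nat (c - 1 - M))" by simp
    have "(\<Sum>x\<in>{M + 1..M + 1 - 1 + int (nat (c - 1 - M))}. h x) = f (M + 1 - 1 + int (nat (c - 1 - M))) - f (M + 1 - 1)"
      by (rule sum_tele_int[where f=f and h=h, OF assms])
    then have "(\<Sum>x\<in>{M + 1..c - 1}. h x) = f (c - 1) - f M" using e by simp
    then show ?thesis using 3 unfolding gsum_def by simp
  qed
qed

lemma binom_tele:
  "(of_int (m + int (Suc j) - c) gchoose (Suc j) :: complex) - (of_int (m - 1 + int (Suc j) - c) gchoose (Suc j))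
   = of_int (m + int j - c) gchoose j"
proof -
  have e1: "(of_int (m + int (Suc j) - c) :: complex) = of_int (m + int j - c) + 1" by simp
  have e2: "(of_int (m - 1 + int (Suc j) - c) :: complex) = of_int (m + int j - c)" by simp
  show ?thesis unfolding e1 e2 gbinomial_Suc_Suc by simp
qed

lemma binom_zero:
  "(of_int (c - 1 + int (Suc j) - c) gchoose (Suc j) :: complex) = 0"
proof -
  have "(of_int (c - 1 + int (Suc j) - c) :: complex) = of_nat j" by simp
  moreover have "(of_nat j gchoose (Suc j) :: complex) = 0"
    by (simp flip: binomial_gbinomial)
  ultimately show ?thesis by simp
qed


definition Aterm :: "complex \<Rightarrow> complex \<Rightarrow> complex \<Rightarrow> complex \<Rightarrow> int \<Rightarrow> int \<Rightarrow> int \<Rightarrow> nat \<Rightarrow> int \<Rightarrow> complex" where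
  "Aterm a b p q r d s n m = (- U p q d / (q powi d * U p q r)) ^ n * (U p q d / U p q (r + d)) powi m
     * W a b p q ((r + d) * int n + r * m + s)"

definition Rterm where
  "Rterm a b p q r d s c n m = Aterm a b p q r d s n m
     - (\<Sum>j<n. Aterm a b p q r d s (n - j) (c - 1) * (of_int (m + int j - c) gchoose j))"

lemma A_tele:
  assumes "q \<noteq> 0" "U p q d \<noteq> 0" "U p q r \<noteq> 0" "U p q (r + d) \<noteq> 0"
  shows "Aterm a b p q r d s (Suc n) m - Aterm a b p q r d s (Suc n) (m - 1) = Aterm a b p q r d s n m"
proof -
  define u where "u = (r + d) * int n + r * m + s"
  define x where "x = U p q d / U p q (r + d)"
  define \<alpha> where "\<alpha> = - U p q d / (q powi d * U p q r)"
  have i1: "(r + d) * int (Suc n) + r * m + s = u + r + d" unfolding u_def by (simp add: algebra_simps)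
  have i2: "(r + d) * int (Suc n) + r * (m - 1) + s = u + d" unfolding u_def by (simp add: algebra_simps)
  have x0: "x \<noteq> 0" unfolding x_def using assms by simp
  have xm: "x powi m = x powi (m - 1) * x" using x0 power_int_add_1[of x "m - 1"] by simp
  have wid: "U p q (r + d) * W a b p q (u + d) - U p q d * W a b p q (u + r + d) = q powi d * U p q r * W a b p q u"
    by (rule Wid[OF assms(1)])
  have qd: "q powi d \<noteq> 0" using assms(1) by simp
  have "Aterm a b p q r d s (Suc n) m - Aterm a b p q r d s (Suc n) (m - 1)
      = \<alpha> ^ n * x powi (m - 1) * (\<alpha> * (x * W a b p q (u + r + d) - W a b p q (u + d)))"
    unfolding Aterm_def i1 i2 \<alpha>_def[symmetric] x_def[symmetric] xm by (simp add: algebra_simps)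
  also have "\<alpha> * (x * W a b p q (u + r + d) - W a b p q (u + d)) = x * W a b p q u"
  proof -
    have "U p q (r + d) * W a b p q (u + d) = q powi d * U p q r * W a b p q u + U p q d * W a b p q (u + r + d)"
      using wid by (simp add: algebra_simps)
    hence "W a b p q (u + d) = (q powi d * U p q r * W a b p q u + U p q d * W a b p q (u + r + d)) / U p q (r + d)"
      using assms(4) by (simp add: field_simps)
    then show ?thesis unfolding \<alpha>_def x_def using assms qd by (simp add: field_simps)
  qed
  also have "\<alpha> ^ n * x powi (m - 1) * (x * W a b p q u) = Aterm a b p q r d s n m"
    unfolding Aterm_def \<alpha>_def[symmetric] x_def[symmetric] xm u_def by (simp add: algebra_simps)
  finally show ?thesis .
qed

lemma R_tele:
  assumes "q \<noteq> 0" "U p q d \<noteq> 0" "U p q r \<noteq> 0" "U p q (r + d) \<noteq> 0"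
  shows "Rterm a b p q r d s c (Suc n) m - Rterm a b p q r d s c (Suc n) (m - 1) = Rterm a b p q r d s c n m"
    and "Rterm a b p q r d s c (Suc n) (c - 1) = 0"
proof -
  let ?A = "Aterm a b p q r d s"
  have split: "Rterm a b p q r d s c (Suc n) m' = ?A (Suc n) m' - ?A (Suc n) (c - 1)
     - (\<Sum>j<n. ?A (n - j) (c - 1) * (of_int (m' + int (Suc j) - c) gchoose (Suc j)))" for m'
    unfolding Rterm_def sum.lessThan_Suc_shift by simp
  have "Rterm a b p q r d s c (Suc n) m - Rterm a b p q r d s c (Suc n) (m - 1)
    = (?A (Suc n) m - ?A (Suc n) (m - 1)) - (\<Sum>j<n. ?A (n - j) (c - 1) *
        ((of_int (m + int (Suc j) - c) gchoose (Suc j)) - (of_int (m - 1 + int (Suc j) - c) gchoose (Suc j))))"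
    unfolding split right_diff_distrib sum_subtractf by (simp only: algebra_simps)
  also have "\<dots> = Rterm a b p q r d s c n m"
    unfolding binom_tele A_tele[OF assms] Rterm_def ..
  finally show "Rterm a b p q r d s c (Suc n) m - Rterm a b p q r d s c (Suc n) (m - 1) = Rterm a b p q r d s c n m" .
  show "Rterm a b p q r d s c (Suc n) (c - 1) = 0"
    unfolding split binom_zero by simp
qed


lemma nested_R:
  assumes "q \<noteq> 0" "U p q d \<noteq> 0" "U p q r \<noteq> 0" "U p q (r + d) \<noteq> 0"
  shows "nested n c (\<lambda>a0. (U p q d / U p q (r + d)) powi a0 * W a b p q (r * a0 + s)) m = Rterm a b p q r d s c n m"
proof (induction n arbitrary: m)
  case 0
  then show ?case by (simp add: Rterm_def Aterm_def)
next
  case (Suc n)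
  have fe: "nested n c (\<lambda>a0. (U p q d / U p q (r + d)) powi a0 * W a b p q (r * a0 + s)) = Rterm a b p q r d s c n"
    using Suc.IH by (intro ext)
  have "nested (Suc n) c (\<lambda>a0. (U p q d / U p q (r + d)) powi a0 * W a b p q (r * a0 + s)) m
     = gsum c m (Rterm a b p q r d s c n)" by (simp only: nested.simps fe)
  also have "\<dots> = Rterm a b p q r d s c (Suc n) m - Rterm a b p q r d s c (Suc n) (c - 1)"
    by (rule gsum_tele) (rule R_tele(1)[OF assms])
  also have "\<dots> = Rterm a b p q r d s c (Suc n) m" using R_tele(2)[OF assms] by simp
  finally show ?case .
qed

lemma Aterm_alt:
  assumes "q \<noteq> 0" "U p q d \<noteq> 0" "U p q r \<noteq> 0" "U p q (r + d) \<noteq> 0"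
  shows "Aterm a b p q r d s k m = (-1) ^ k / q powi (d * int k) * (U p q d / U p q r) ^ k
     * (U p q d / U p q (r + d)) powi m * W a b p q ((r + d) * int k + r * m + s)"
proof -
  have e: "q powi (d * int k) = (q powi d) ^ k" by (simp add: power_int_mult)
  have "(- U p q d / (q powi d * U p q r)) = (-1) * (U p q d / U p q r) / q powi d" by simp
  hence "(- U p q d / (q powi d * U p q r)) ^ k = (-1) ^ k * (U p q d / U p q r) ^ k / (q powi d) ^ k"
    by (simp only: power_divide power_mult_distrib)
  thus ?thesis unfolding Aterm_def e by simp
qed

theorem theorem5:
  fixes a b p q :: complex and r s c d an :: int and n :: nat
  assumes "p \<noteq> 0" and "q \<noteq> 0"
    and "r \<noteq> 0" and "r + d \<noteq> 0" and "n > 0"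
    and "U p q d \<noteq> 0" and "U p q r \<noteq> 0" and "U p q (r + d) \<noteq> 0"
  shows "nested n c (\<lambda>a0. (U p q d / U p q (r + d)) powi a0 * W a b p q (r * a0 + s)) an
    = (-1) ^ n * U p q d powi (int n + an)
        / (q powi (d * int n) * U p q r ^ n * U p q (r + d) powi an)
        * W a b p q ((r + d) * int n + r * an + s)
      - (U p q d / U p q (r + d)) powi (c - 1)
        * (\<Sum>j = 0..n - 1. (-1) ^ (n - j) / q powi (d * int (n - j))
            * (U p q d / U p q r) ^ (n - j)
            * W a b p q (r * (int (n - j) + c - 1) + d * int (n - j) + s)
            * (of_int (an + int j - c) gchoose j))"
proof -
  note nz = assms(2) assms(6-8)
  define x where "x = U p q d / U p q (r + d)"
  have L: "nested n c (\<lambda>a0. (U p q d / U p q (r + d)) powi a0 * W a b p q (r * a0 + s)) an = Rterm a b p q r d s c n an"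
    by (rule nested_R[OF nz])
  have first: "Aterm a b p q r d s n an = (-1) ^ n * U p q d powi (int n + an)
        / (q powi (d * int n) * U p q r ^ n * U p q (r + d) powi an)
        * W a b p q ((r + d) * int n + r * an + s)"
  proof -
    have e1: "U p q d powi (int n + an) = U p q d ^ n * U p q d powi an"
      using assms(6) by (simp add: power_int_add)
    have e2: "(U p q d / U p q (r + d)) powi an = U p q d powi an / U p q (r + d) powi an"
      by (simp add: power_int_divide_distrib)
    show ?thesis unfolding Aterm_alt[OF nz] e1 e2 using assms by (simp add: power_divide)
  qed
  have ivl: "{0..n - 1} = {..<n}" using assms(5) by auto
  have second: "(\<Sum>j<n. Aterm a b p q r d s (n - j) (c - 1) * (of_int (an + int j - c) gchoose j))
     = (U p q d / U p q (r + d)) powi (c - 1)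
        * (\<Sum>j = 0..n - 1. (-1) ^ (n - j) / q powi (d * int (n - j))
            * (U p q d / U p q r) ^ (n - j)
            * W a b p q (r * (int (n - j) + c - 1) + d * int (n - j) + s)
            * (of_int (an + int j - c) gchoose j))"
    unfolding ivl sum_distrib_left
  proof (rule sum.cong[OF refl])
    fix j assume "j \<in> {..<n}"
    have ix: "(r + d) * int (n - j) + r * (c - 1) + s = r * (int (n - j) + c - 1) + d * int (n - j) + s"
      by (simp add: algebra_simps)
    show "Aterm a b p q r d s (n - j) (c - 1) * (of_int (an + int j - c) gchoose j) =
      (U p q d / U p q (r + d)) powi (c - 1) * ((-1) ^ (n - j) / q powi (d * int (n - j))
            * (U p q d / U p q r) ^ (n - j)
            * W a b p q (r * (int (n - j) + c - 1) + d * int (n - j) + s)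
            * (of_int (an + int j - c) gchoose j))"
      unfolding Aterm_alt[OF nz] ix by (simp add: algebra_simps)
  qed
  show ?thesis unfolding L Rterm_def first second ..
qed

end
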